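(* Let $n,k\geq 1$ be integers and let $A_1,\dots,A_k,B_1,\dots,B_k\in\mathbb{R}$. For $\alpha\in\mathbb{C}$ put $a_i=A_i+B_i\alpha$ ($i=1,\dots,k$) and $$O_\alpha(z)=z^n\,\frac{a_k+a_{k-1}z+\dots+a_1 z^{k-1}+z^k}{1+a_1 z+\dots+a_{k-1}z^{k-1}+a_k z^k},$$ considered for those $\alpha$ with $a_k\neq 0$ and $1+a_1+\dots+a_k\neq 0$; for such $\alpha$, $z=1$ is a fixed point of $O_\alpha$. Define $$A=n+k+\sum_{j=1}^k(n+k-2j)A_j,\quad B=\sum_{j=1}^k(n+k-2j)B_j,\quad A'=1+\sum_{j=1}^kA_j,\quad B'=\sum_{j=1}^kB_j,$$ and, when $B^2-B'^2\neq0$, $c=(AB-A'B')/(B^2-B'^2)$ and $r=(A'B-AB')/(B^2-B'^2)$. Then: \begin{enumerate} \item If $B^2-B'^2\neq 0$: (i) $z=1$ is indifferent on the circle $C:\ |\alpha+c|=|r|$; (ii) $z=1$ is attracting inside $C$ if $B^2-B'^2>0$ and outside $C$ if $B^2-B'^2<0$; (iii) $z=1$ is repelling outside $C$ if $B^2-B'^2>0$ and inside $C$ if $B^2-B'^2<0$. \item If $B^2-B'^2=0$: (a) if $B=B'\neq0$: $z=1$ is indifferent if $A=A'$; $z=1$ is attracting if either $\mathrm{Re}(\alpha)<-\frac{A+A'}{2B}$ and $B(A-A')>0$, or $\mathrm{Re}(\alpha)>-\frac{A+A'}{2B}$ and $B(A-A')<0$; $z=1$ is repelling otherwise. (b) if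 $B=-B'\neq0$: $z=1$ is indifferent if $A=-A'$; $z=1$ is attracting if either $\mathrm{Re}(\alpha)<\frac{A'-A}{2B}$ and $B(A+A')>0$, or $\mathrm{Re}(\alpha)>\frac{A'-A}{2B}$ and $B(A+A')<0$; $z=1$ is repelling otherwise. (c) if $B=B'=0$: $z=1$ is indifferent if $|A|=|A'|$, attracting if $|A|<|A'|$, and repelling if $|A|>|A'|$. \end{enumerate} Moreover, if $\alpha=-A/B$, the fixed point $z=1$ is superattracting.
   Context: For a fixed point $z_0$ of a rational map $R$ with multiplier $\lambda=R'(z_0)$, $z_0$ is attracting if $|\lambda|<1$, superattracting if $\lambda=0$, repelling if $|\lambda|>1$, and indifferent if $|\lambda|=1$. *)

theory Defs
  imports "HOL-Analysis.Analysis"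
begin

definition coef :: "(nat \<Rightarrow> real) \<Rightarrow> (nat \<Rightarrow> real) \<Rightarrow> complex \<Rightarrow> nat \<Rightarrow> complex" where
  "coef A B \<alpha> i = complex_of_real (A i) + complex_of_real (B i) * \<alpha>"

definition Omap :: "nat \<Rightarrow> nat \<Rightarrow> (nat \<Rightarrow> real) \<Rightarrow> (nat \<Rightarrow> real) \<Rightarrow> complex \<Rightarrow> complex \<Rightarrow> complex" where
  "Omap n k A B \<alpha> z =
     z ^ n * ((z ^ k + (\<Sum>j = 1..k. coef A B \<alpha> j * z ^ (k - j))) /
              (1 + (\<Sum>j = 1..k. coef A B \<alpha> j * z ^ j)))"

definition multiplier :: "(complex \<Rightarrow> complex) \<Rightarrow> complex \<Rightarrow> complex" where
  "multiplier f z0 = deriv f z0"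

definition attracting_fp :: "(complex \<Rightarrow> complex) \<Rightarrow> complex \<Rightarrow> bool" where
  "attracting_fp f z0 \<longleftrightarrow> f z0 = z0 \<and> cmod (multiplier f z0) < 1"

definition superattracting_fp :: "(complex \<Rightarrow> complex) \<Rightarrow> complex \<Rightarrow> bool" where
  "superattracting_fp f z0 \<longleftrightarrow> f z0 = z0 \<and> multiplier f z0 = 0"

definition repelling_fp :: "(complex \<Rightarrow> complex) \<Rightarrow> complex \<Rightarrow> bool" where
  "repelling_fp f z0 \<longleftrightarrow> f z0 = z0 \<and> cmod (multiplier f z0) > 1"

definition indifferent_fp :: "(complex \<Rightarrow> complex) \<Rightarrow> complex \<Rightarrow> bool" where
  "indifferent_fp f z0 \<longleftrightarrow> f z0 = z0 \<and> cmod (multiplier f z0) = 1"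

end

theory Submission
  imports Defs
begin

lemma dpow1: "((\<lambda>z::complex. z ^ m) has_field_derivative of_nat m) (at 1)"
  using DERIV_power[OF DERIV_ident, where x="1::complex" and s=UNIV and n=m] by simp

lemma deriv_at1:
  fixes a :: "nat \<Rightarrow> complex"
  assumes S: "1 + (\<Sum>j = 1..k. a j) \<noteq> 0"
  shows "((\<lambda>z. z ^ n * ((z ^ k + (\<Sum>j = 1..k. a j * z ^ (k - j))) /
              (1 + (\<Sum>j = 1..k. a j * z ^ j)))) has_field_derivative
     (of_nat n * (1 + (\<Sum>j = 1..k. a j)) + of_nat k + (\<Sum>j = 1..k. a j * (of_nat k - 2 * of_nat j)))
        / (1 + (\<Sum>j = 1..k. a j))) (at 1)"
proof -
  define S where "S = 1 + (\<Sum>j = 1..k. a j)"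
  have d1: "((\<lambda>z::complex. z ^ k) has_field_derivative of_nat k) (at 1)"
    by (rule dpow1)
  have d2: "((\<lambda>z. \<Sum>j = 1..k. a j * z ^ (k - j)) has_field_derivative (\<Sum>j = 1..k. a j * of_nat (k - j))) (at 1)"
    by (rule DERIV_sum, rule DERIV_cmult, rule dpow1)
  have dP: "((\<lambda>z. z ^ k + (\<Sum>j = 1..k. a j * z ^ (k - j))) has_field_derivative
      (of_nat k + (\<Sum>j = 1..k. a j * of_nat (k - j)))) (at 1)"
    by (rule DERIV_add[OF d1 d2])
  have d3: "((\<lambda>z. \<Sum>j = 1..k. a j * z ^ j) has_field_derivative (\<Sum>j = 1..k. a j * of_nat j)) (at 1)"
    by (rule DERIV_sum, rule DERIV_cmult, rule dpow1)
  have dQ: "((\<lambda>z. 1 + (\<Sum>j = 1..k. a j * z ^ j)) has_field_derivative (\<Sum>j = 1..k. a j * of_nat j)) (at 1)"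
    using DERIV_add[OF DERIV_const d3] by simp
  have dR: "((\<lambda>z. (z ^ k + (\<Sum>j = 1..k. a j * z ^ (k - j))) / (1 + (\<Sum>j = 1..k. a j * z ^ j)))
     has_field_derivative ((of_nat k + (\<Sum>j = 1..k. a j * of_nat (k - j))) * S - S * (\<Sum>j = 1..k. a j * of_nat j)) / (S * S)) (at 1)"
    using DERIV_divide[OF dP dQ] S by (simp add: S_def add.commute)
  have dn: "((\<lambda>z::complex. z ^ n) has_field_derivative of_nat n) (at 1)"
    by (rule dpow1)
  have dO: "((\<lambda>z. z ^ n * ((z ^ k + (\<Sum>j = 1..k. a j * z ^ (k - j))) /
              (1 + (\<Sum>j = 1..k. a j * z ^ j)))) has_field_derivative
       of_nat n * (S / S) + ((of_nat k + (\<Sum>j = 1..k. a j * of_nat (k - j))) * S - S * (\<Sum>j = 1..k. a j * of_nat j)) / (S * S)) (at 1)"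
    using DERIV_mult[OF dn dR] by (simp add: S_def add.commute)
  have e1: "(\<Sum>j = 1..k. a j * of_nat (k - j)) - (\<Sum>j = 1..k. a j * of_nat j) = (\<Sum>j = 1..k. a j * (of_nat k - 2 * of_nat j))"
    unfolding sum_subtractf[symmetric]
    by (rule sum.cong) (auto simp: of_nat_diff algebra_simps)
  have "of_nat n * (S / S) + ((of_nat k + (\<Sum>j = 1..k. a j * of_nat (k - j))) * S - S * (\<Sum>j = 1..k. a j * of_nat j)) / (S * S)
     = (of_nat n * S + of_nat k + (\<Sum>j = 1..k. a j * (of_nat k - 2 * of_nat j))) / S"
  proof -
    have g: "\<And>X Y Z N K T::complex. X - Y = Z \<Longrightarrow> T \<noteq> 0 \<Longrightarrow>
       N * (T / T) + ((K + X) * T - T * Y) / (T * T) = (N * T + K + Z) / T"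
      by (simp add: field_simps)
    show ?thesis by (rule g[OF e1]) (use S in \<open>simp add: S_def\<close>)
  qed
  then show ?thesis using dO unfolding S_def by simp
qed
theorem proposition3p5:
  fixes n k :: nat and A B :: "nat \<Rightarrow> real" and \<alpha> :: complex
    and AA BB A' B' c r :: real
  assumes "n \<ge> 1" and "k \<ge> 1"
    and "coef A B \<alpha> k \<noteq> 0"
    and "1 + (\<Sum>j = 1..k. coef A B \<alpha> j) \<noteq> 0"
    and "AA = real (n + k) + (\<Sum>j = 1..k. (real n + real k - 2 * real j) * A j)"
    and "BB = (\<Sum>j = 1..k. (real n + real k - 2 * real j) * B j)"
    and "A' = 1 + (\<Sum>j = 1..k. A j)"
    and "B' = (\<Sum>j = 1..k. B j)"
    and "c = (AA * BB - A' * B') / (BB\<^sup>2 - B'\<^sup>2)"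
    and "r = (A' * BB - AA * B') / (BB\<^sup>2 - B'\<^sup>2)"
  shows
    "Omap n k A B \<alpha> 1 = 1
     \<and> (BB\<^sup>2 - B'\<^sup>2 \<noteq> 0 \<longrightarrow>
          (cmod (\<alpha> + complex_of_real c) = \<bar>r\<bar> \<longrightarrow> indifferent_fp (Omap n k A B \<alpha>) 1)
        \<and> (BB\<^sup>2 - B'\<^sup>2 > 0 \<and> cmod (\<alpha> + complex_of_real c) < \<bar>r\<bar> \<longrightarrow> attracting_fp (Omap n k A B \<alpha>) 1)
        \<and> (BB\<^sup>2 - B'\<^sup>2 < 0 \<and> cmod (\<alpha> + complex_of_real c) > \<bar>r\<bar> \<longrightarrow> attracting_fp (Omap n k A B \<alpha>) 1)
        \<and> (BB\<^sup>2 - B'\<^sup>2 > 0 \<and> cmod (\<alpha> + complex_of_real c) > \<bar>r\<bar> \<longrightarrow> repelling_fp (Omap n k A B \<alpha>) 1)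
        \<and> (BB\<^sup>2 - B'\<^sup>2 < 0 \<and> cmod (\<alpha> + complex_of_real c) < \<bar>r\<bar> \<longrightarrow> repelling_fp (Omap n k A B \<alpha>) 1))
     \<and> (BB = B' \<and> BB \<noteq> 0 \<longrightarrow>
          (AA = A' \<longrightarrow> indifferent_fp (Omap n k A B \<alpha>) 1)
        \<and> ((Re \<alpha> < - (AA + A') / (2 * BB) \<and> BB * (AA - A') > 0)
            \<or> (Re \<alpha> > - (AA + A') / (2 * BB) \<and> BB * (AA - A') < 0)
            \<longrightarrow> attracting_fp (Omap n k A B \<alpha>) 1)
        \<and> ((Re \<alpha> > - (AA + A') / (2 * BB) \<and> BB * (AA - A') > 0)
            \<or> (Re \<alpha> < - (AA + A') / (2 * BB) \<and> BB * (AA - A') < 0)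
            \<longrightarrow> repelling_fp (Omap n k A B \<alpha>) 1))
     \<and> (BB = - B' \<and> BB \<noteq> 0 \<longrightarrow>
          (AA = - A' \<longrightarrow> indifferent_fp (Omap n k A B \<alpha>) 1)
        \<and> ((Re \<alpha> < (A' - AA) / (2 * BB) \<and> BB * (AA + A') > 0)
            \<or> (Re \<alpha> > (A' - AA) / (2 * BB) \<and> BB * (AA + A') < 0)
            \<longrightarrow> attracting_fp (Omap n k A B \<alpha>) 1)
        \<and> ((Re \<alpha> > (A' - AA) / (2 * BB) \<and> BB * (AA + A') > 0)
            \<or> (Re \<alpha> < (A' - AA) / (2 * BB) \<and> BB * (AA + A') < 0)
            \<longrightarrow> repelling_fp (Omap n k A B \<alpha>) 1))
     \<and> (BB = 0 \<and> B' = 0 \<longrightarrow>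
          (\<bar>AA\<bar> = \<bar>A'\<bar> \<longrightarrow> indifferent_fp (Omap n k A B \<alpha>) 1)
        \<and> (\<bar>AA\<bar> < \<bar>A'\<bar> \<longrightarrow> attracting_fp (Omap n k A B \<alpha>) 1)
        \<and> (\<bar>AA\<bar> > \<bar>A'\<bar> \<longrightarrow> repelling_fp (Omap n k A B \<alpha>) 1))
     \<and> (BB \<noteq> 0 \<and> \<alpha> = complex_of_real (- AA / BB) \<longrightarrow> superattracting_fp (Omap n k A B \<alpha>) 1)"
proof -
  define a where "a = coef A B \<alpha>"
  define x where "x = Re \<alpha>"
  define y where "y = Im \<alpha>"
  define d where "d = BB\<^sup>2 - B'\<^sup>2"
  define N where "N = complex_of_real AA + complex_of_real BB * \<alpha>"
  define Dn where "Dn = complex_of_real A' + complex_of_real B' * \<alpha>"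
  define nN where "nN = (AA + BB * x)\<^sup>2 + (BB * y)\<^sup>2"
  define nD where "nD = (A' + B' * x)\<^sup>2 + (B' * y)\<^sup>2"
  have al: "\<alpha> = Complex x y" by (simp add: x_def y_def)
  have sumA: "(\<Sum>j = 1..k. a j) = complex_of_real (\<Sum>j = 1..k. A j) + complex_of_real (\<Sum>j = 1..k. B j) * \<alpha>"
    by (simp add: a_def coef_def sum.distrib sum_distrib_right)
  have S: "1 + (\<Sum>j = 1..k. a j) = Dn"
    using sumA by (simp add: Dn_def assms(7,8))
  have Dn0: "Dn \<noteq> 0" using assms(4) S by (simp add: a_def)
  have numer: "of_nat n * Dn + of_nat k + (\<Sum>j = 1..k. a j * (of_nat k - 2 * of_nat j)) = N"
  proof -
    have "N = of_nat n + of_nat k + (\<Sum>j = 1..k. complex_of_real ((real n + real k - 2 * real j) * A j)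
        + complex_of_real ((real n + real k - 2 * real j) * B j) * \<alpha>)"
      unfolding N_def assms(5,6) by (simp add: sum.distrib sum_distrib_right)
    also have "\<dots> = of_nat n + of_nat k + (\<Sum>j = 1..k. of_nat n * a j + a j * (of_nat k - 2 * of_nat j))"
      by (rule arg_cong[where f="\<lambda>t. of_nat n + of_nat k + t"], rule sum.cong)
         (simp_all add: a_def coef_def algebra_simps)
    also have "\<dots> = of_nat n * (1 + (\<Sum>j = 1..k. a j)) + of_nat k + (\<Sum>j = 1..k. a j * (of_nat k - 2 * of_nat j))"
      unfolding sum.distrib sum_distrib_left[symmetric] by (simp add: algebra_simps)
    finally show ?thesis using S by simp
  qed
  have der: "(Omap n k A B \<alpha> has_field_derivative N / Dn) (at 1)"
    using deriv_at1[of a k n] assms(4) S numer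
    unfolding Omap_def a_def[symmetric] by (simp add: a_def)
  have mult: "multiplier (Omap n k A B \<alpha>) 1 = N / Dn"
    unfolding multiplier_def using der by (rule DERIV_imp_deriv)
  have fix1: "Omap n k A B \<alpha> 1 = 1"
    using S Dn0 unfolding Omap_def a_def[symmetric] by simp
  have cN: "cmod N = sqrt nN" unfolding N_def nN_def al cmod_def by (simp add: power2_eq_square)
  have cD: "cmod Dn = sqrt nD" unfolding Dn_def nD_def al cmod_def by (simp add: power2_eq_square)
  have cM: "cmod (N / Dn) = sqrt nN / sqrt nD" by (simp add: norm_divide cN cD)
  have pD: "nD > 0" using Dn0 cD by (metis norm_ge_zero order_le_less real_sqrt_eq_zero_cancel_iff norm_eq_zero real_sqrt_ge_zero zero_le_power2 add_nonneg_nonneg nD_def)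
  have att: "attracting_fp (Omap n k A B \<alpha>) 1" if "nN < nD"
    using that pD fix1 unfolding attracting_fp_def mult cM by (simp add: real_sqrt_less_iff)
  have rep: "repelling_fp (Omap n k A B \<alpha>) 1" if "nN > nD"
    using that pD fix1 unfolding repelling_fp_def mult cM by (simp add: real_sqrt_less_iff)
  have ind: "indifferent_fp (Omap n k A B \<alpha>) 1" if "nN = nD"
    using that pD fix1 unfolding indifferent_fp_def mult cM by simp
  have key: "nN - nD = d * (x\<^sup>2 + y\<^sup>2) + 2 * (AA * BB - A' * B') * x + AA\<^sup>2 - A'\<^sup>2"
    unfolding nN_def nD_def d_def by (simp add: power2_eq_square algebra_simps)
  have sqlt: "\<bar>u\<bar> < \<bar>v\<bar> \<longleftrightarrow> u\<^sup>2 < v\<^sup>2" for u v :: real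
    using abs_le_square_iff[of v u] by linarith
  have sqeq: "\<bar>u\<bar> = \<bar>v\<bar> \<longleftrightarrow> u\<^sup>2 = v\<^sup>2" for u v :: real
    using abs_le_square_iff[of v u] abs_le_square_iff[of u v] by linarith
  define m where "m = cmod (\<alpha> + complex_of_real c)"
  have mabs: "\<bar>m\<bar> = m" by (simp add: m_def)
  have m2: "m\<^sup>2 = (x + c)\<^sup>2 + y\<^sup>2" unfolding m_def cmod_power2 by (simp add: x_def y_def)
  have P1: "BB\<^sup>2 - B'\<^sup>2 \<noteq> 0 \<longrightarrow>
          (m = \<bar>r\<bar> \<longrightarrow> indifferent_fp (Omap n k A B \<alpha>) 1)
        \<and> (BB\<^sup>2 - B'\<^sup>2 > 0 \<and> m < \<bar>r\<bar> \<longrightarrow> attracting_fp (Omap n k A B \<alpha>) 1)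
        \<and> (BB\<^sup>2 - B'\<^sup>2 < 0 \<and> m > \<bar>r\<bar> \<longrightarrow> attracting_fp (Omap n k A B \<alpha>) 1)
        \<and> (BB\<^sup>2 - B'\<^sup>2 > 0 \<and> m > \<bar>r\<bar> \<longrightarrow> repelling_fp (Omap n k A B \<alpha>) 1)
        \<and> (BB\<^sup>2 - B'\<^sup>2 < 0 \<and> m < \<bar>r\<bar> \<longrightarrow> repelling_fp (Omap n k A B \<alpha>) 1)"
  proof
    assume d0: "BB\<^sup>2 - B'\<^sup>2 \<noteq> 0"
    then have dd: "d \<noteq> 0" by (simp add: d_def)
    have dc: "d * c = AA * BB - A' * B'" using dd by (simp add: assms(9) d_def)
    have dr: "d * r = A' * BB - AA * B'" using dd by (simp add: assms(10) d_def)
    have "(d * c)\<^sup>2 - (d * r)\<^sup>2 = (AA\<^sup>2 - A'\<^sup>2) * d"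
    proof -
      have "(AA * BB - A' * B')\<^sup>2 - (A' * BB - AA * B')\<^sup>2 = (AA\<^sup>2 - A'\<^sup>2) * (BB\<^sup>2 - B'\<^sup>2)"
        by (simp add: power2_eq_square algebra_simps)
      then show ?thesis unfolding dc dr by (simp add: d_def)
    qed
    moreover have "d * (d * c\<^sup>2 - d * r\<^sup>2) = (d * c)\<^sup>2 - (d * r)\<^sup>2"
      by (simp add: power2_eq_square algebra_simps)
    ultimately have "d * (d * c\<^sup>2 - d * r\<^sup>2) = d * (AA\<^sup>2 - A'\<^sup>2)"
      by (simp add: mult.commute)
    then have e: "d * c\<^sup>2 - d * r\<^sup>2 = AA\<^sup>2 - A'\<^sup>2" using dd by simp
    have E: "nN - nD = d * (m\<^sup>2 - r\<^sup>2)"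
    proof -
      have E0: "d * (m\<^sup>2 - r\<^sup>2) = d * (x\<^sup>2 + y\<^sup>2) + 2 * (d * c) * x + (d * c\<^sup>2 - d * r\<^sup>2)"
        unfolding m2 by (simp add: power2_eq_square algebra_simps)
      show ?thesis using key E0[unfolded dc e] by linarith
    qed
    show "(m = \<bar>r\<bar> \<longrightarrow> indifferent_fp (Omap n k A B \<alpha>) 1)
        \<and> (BB\<^sup>2 - B'\<^sup>2 > 0 \<and> m < \<bar>r\<bar> \<longrightarrow> attracting_fp (Omap n k A B \<alpha>) 1)
        \<and> (BB\<^sup>2 - B'\<^sup>2 < 0 \<and> m > \<bar>r\<bar> \<longrightarrow> attracting_fp (Omap n k A B \<alpha>) 1)
        \<and> (BB\<^sup>2 - B'\<^sup>2 > 0 \<and> m > \<bar>r\<bar> \<longrightarrow> repelling_fp (Omap n k A B \<alpha>) 1)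
        \<and> (BB\<^sup>2 - B'\<^sup>2 < 0 \<and> m < \<bar>r\<bar> \<longrightarrow> repelling_fp (Omap n k A B \<alpha>) 1)"
    proof (intro conjI impI)
      assume "m = \<bar>r\<bar>" then have "m\<^sup>2 = r\<^sup>2" by simp
      then show "indifferent_fp (Omap n k A B \<alpha>) 1" using E ind by simp
    next
      assume h: "BB\<^sup>2 - B'\<^sup>2 > 0 \<and> m < \<bar>r\<bar>"
      then have "m\<^sup>2 < r\<^sup>2" using sqlt[of m r] mabs by simp
      then have "nN - nD < 0" using h E by (simp add: d_def mult_pos_neg)
      then show "attracting_fp (Omap n k A B \<alpha>) 1" using att by simp
    next
      assume h: "BB\<^sup>2 - B'\<^sup>2 < 0 \<and> m > \<bar>r\<bar>"
      then have "m\<^sup>2 > r\<^sup>2" using sqlt[of r m] mabs by simp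
      then have "nN - nD < 0" using h E by (simp add: d_def mult_neg_pos)
      then show "attracting_fp (Omap n k A B \<alpha>) 1" using att by simp
    next
      assume h: "BB\<^sup>2 - B'\<^sup>2 > 0 \<and> m > \<bar>r\<bar>"
      then have "m\<^sup>2 > r\<^sup>2" using sqlt[of r m] mabs by simp
      then have "nN - nD > 0" using h E by (simp add: d_def)
      then show "repelling_fp (Omap n k A B \<alpha>) 1" using rep by simp
    next
      assume h: "BB\<^sup>2 - B'\<^sup>2 < 0 \<and> m < \<bar>r\<bar>"
      then have "m\<^sup>2 < r\<^sup>2" using sqlt[of m r] mabs by simp
      then have "nN - nD > 0" using h E by (simp add: d_def mult_neg_neg)
      then show "repelling_fp (Omap n k A B \<alpha>) 1" using rep by simp
    qed
  qed
  have P2: "BB = B' \<and> BB \<noteq> 0 \<longrightarrow>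
          (AA = A' \<longrightarrow> indifferent_fp (Omap n k A B \<alpha>) 1)
        \<and> ((Re \<alpha> < - (AA + A') / (2 * BB) \<and> BB * (AA - A') > 0)
            \<or> (Re \<alpha> > - (AA + A') / (2 * BB) \<and> BB * (AA - A') < 0)
            \<longrightarrow> attracting_fp (Omap n k A B \<alpha>) 1)
        \<and> ((Re \<alpha> > - (AA + A') / (2 * BB) \<and> BB * (AA - A') > 0)
            \<or> (Re \<alpha> < - (AA + A') / (2 * BB) \<and> BB * (AA - A') < 0)
            \<longrightarrow> repelling_fp (Omap n k A B \<alpha>) 1)"
  proof
    assume h: "BB = B' \<and> BB \<noteq> 0"
    define x0 where "x0 = - (AA + A') / (2 * BB)"
    have E: "nN - nD = 2 * (BB * (AA - A')) * (x - x0)"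
      unfolding key x0_def d_def using h by (simp add: field_simps power2_eq_square)
    have xr: "Re \<alpha> = x" by (simp add: x_def)
    show "(AA = A' \<longrightarrow> indifferent_fp (Omap n k A B \<alpha>) 1)
        \<and> ((Re \<alpha> < - (AA + A') / (2 * BB) \<and> BB * (AA - A') > 0)
            \<or> (Re \<alpha> > - (AA + A') / (2 * BB) \<and> BB * (AA - A') < 0)
            \<longrightarrow> attracting_fp (Omap n k A B \<alpha>) 1)
        \<and> ((Re \<alpha> > - (AA + A') / (2 * BB) \<and> BB * (AA - A') > 0)
            \<or> (Re \<alpha> < - (AA + A') / (2 * BB) \<and> BB * (AA - A') < 0)
            \<longrightarrow> repelling_fp (Omap n k A B \<alpha>) 1)"
      unfolding x0_def[symmetric] xr
    proof (intro conjI impI)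
      assume "AA = A'" then show "indifferent_fp (Omap n k A B \<alpha>) 1" using E ind by simp
    next
      assume "(x < x0 \<and> BB * (AA - A') > 0) \<or> (x > x0 \<and> BB * (AA - A') < 0)"
      then have "nN - nD < 0" unfolding E by (auto simp: mult_less_0_iff)
      then show "attracting_fp (Omap n k A B \<alpha>) 1" using att by simp
    next
      assume "(x > x0 \<and> BB * (AA - A') > 0) \<or> (x < x0 \<and> BB * (AA - A') < 0)"
      then have "nN - nD > 0" unfolding E by (auto simp: zero_less_mult_iff)
      then show "repelling_fp (Omap n k A B \<alpha>) 1" using rep by simp
    qed
  qed
  have P3: "BB = - B' \<and> BB \<noteq> 0 \<longrightarrow>
          (AA = - A' \<longrightarrow> indifferent_fp (Omap n k A B \<alpha>) 1)
        \<and> ((Re \<alpha> < (A' - AA) / (2 * BB) \<and> BB * (AA + A') > 0)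
            \<or> (Re \<alpha> > (A' - AA) / (2 * BB) \<and> BB * (AA + A') < 0)
            \<longrightarrow> attracting_fp (Omap n k A B \<alpha>) 1)
        \<and> ((Re \<alpha> > (A' - AA) / (2 * BB) \<and> BB * (AA + A') > 0)
            \<or> (Re \<alpha> < (A' - AA) / (2 * BB) \<and> BB * (AA + A') < 0)
            \<longrightarrow> repelling_fp (Omap n k A B \<alpha>) 1)"
  proof
    assume h: "BB = - B' \<and> BB \<noteq> 0"
    define x0 where "x0 = (A' - AA) / (2 * BB)"
    have E: "nN - nD = 2 * (BB * (AA + A')) * (x - x0)"
      unfolding key x0_def d_def using h by (simp add: field_simps power2_eq_square)
    have xr: "Re \<alpha> = x" by (simp add: x_def)
    show "(AA = - A' \<longrightarrow> indifferent_fp (Omap n k A B \<alpha>) 1)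
        \<and> ((Re \<alpha> < (A' - AA) / (2 * BB) \<and> BB * (AA + A') > 0)
            \<or> (Re \<alpha> > (A' - AA) / (2 * BB) \<and> BB * (AA + A') < 0)
            \<longrightarrow> attracting_fp (Omap n k A B \<alpha>) 1)
        \<and> ((Re \<alpha> > (A' - AA) / (2 * BB) \<and> BB * (AA + A') > 0)
            \<or> (Re \<alpha> < (A' - AA) / (2 * BB) \<and> BB * (AA + A') < 0)
            \<longrightarrow> repelling_fp (Omap n k A B \<alpha>) 1)"
      unfolding x0_def[symmetric] xr
    proof (intro conjI impI)
      assume "AA = - A'" then show "indifferent_fp (Omap n k A B \<alpha>) 1" using E ind by simp
    next
      assume "(x < x0 \<and> BB * (AA + A') > 0) \<or> (x > x0 \<and> BB * (AA + A') < 0)"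
      then have "nN - nD < 0" unfolding E by (auto simp: mult_less_0_iff)
      then show "attracting_fp (Omap n k A B \<alpha>) 1" using att by simp
    next
      assume "(x > x0 \<and> BB * (AA + A') > 0) \<or> (x < x0 \<and> BB * (AA + A') < 0)"
      then have "nN - nD > 0" unfolding E by (auto simp: zero_less_mult_iff)
      then show "repelling_fp (Omap n k A B \<alpha>) 1" using rep by simp
    qed
  qed
  have P4: "BB = 0 \<and> B' = 0 \<longrightarrow>
          (\<bar>AA\<bar> = \<bar>A'\<bar> \<longrightarrow> indifferent_fp (Omap n k A B \<alpha>) 1)
        \<and> (\<bar>AA\<bar> < \<bar>A'\<bar> \<longrightarrow> attracting_fp (Omap n k A B \<alpha>) 1)
        \<and> (\<bar>AA\<bar> > \<bar>A'\<bar> \<longrightarrow> repelling_fp (Omap n k A B \<alpha>) 1)"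
  proof
    assume h: "BB = 0 \<and> B' = 0"
    have E: "nN - nD = AA\<^sup>2 - A'\<^sup>2" unfolding key d_def using h by simp
    show "(\<bar>AA\<bar> = \<bar>A'\<bar> \<longrightarrow> indifferent_fp (Omap n k A B \<alpha>) 1)
        \<and> (\<bar>AA\<bar> < \<bar>A'\<bar> \<longrightarrow> attracting_fp (Omap n k A B \<alpha>) 1)
        \<and> (\<bar>AA\<bar> > \<bar>A'\<bar> \<longrightarrow> repelling_fp (Omap n k A B \<alpha>) 1)"
      using E sqeq[of AA A'] sqlt[of AA A'] sqlt[of A' AA] ind att rep by auto
  qed
  have P5: "BB \<noteq> 0 \<and> \<alpha> = complex_of_real (- AA / BB) \<longrightarrow> superattracting_fp (Omap n k A B \<alpha>) 1"
  proof
    assume h: "BB \<noteq> 0 \<and> \<alpha> = complex_of_real (- AA / BB)"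
    then have "N = 0" unfolding N_def by (simp add: field_simps)
    then show "superattracting_fp (Omap n k A B \<alpha>) 1"
      unfolding superattracting_fp_def mult using fix1 by simp
  qed
  show ?thesis using fix1 P1 P2 P3 P4 P5 unfolding m_def by blast
qed
end
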